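(* Let $\mathbf{g}\in H_{1,2,2}$ with $N(\mathbf{g})$ even. Then there exist $\mathbf{h},\mathbf{h}'\in H_{1,2,2}$ with $\mathbf{g} = (1+\mathbf{i})\mathbf{h}$ and $\mathbf{g} = \mathbf{h}'(1+\mathbf{i})$; i.e. $1+\mathbf{i}$ is both a left factor and a right factor of $\mathbf{g}$ in $H_{1,2,2}$.
   Context: Let $\mathbf{i},\mathbf{j},\mathbf{k}$ be the standard basis units of the real quaternions. For a quaternion $\mathbf{q}=q_1+q_2\mathbf{i}+q_3\mathbf{j}+q_4\mathbf{k}$, its conjugate is $\overline{\mathbf{q}}=q_1-q_2\mathbf{i}-q_3\mathbf{j}-q_4\mathbf{k}$ and its norm is $N(\mathbf{q})=\mathbf{q}\overline{\mathbf{q}}$. $H_{1,2,2}$ is the $\mathbb{Z}$-module generated by $\mathbf{v}_1=1$, $\mathbf{v}_2=\mathbf{i}$, $\mathbf{v}_3=\tfrac12(1+\mathbf{i}+\sqrt2\,\mathbf{j})$, $\mathbf{v}_4=\tfrac12(1+\mathbf{i}+\sqrt2\,\mathbf{k})$; it is a subring of the quaternions, closed under conjugation, with the norm taking nonnegative integer values on it. *)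

theory Defs
  imports Complex_Main
begin

datatype quat = Quat (qre: real) (qi: real) (qj: real) (qk: real)

definition qadd :: "quat \<Rightarrow> quat \<Rightarrow> quat" where
  "qadd p q = Quat (qre p + qre q) (qi p + qi q) (qj p + qj q) (qk p + qk q)"

definition qscale :: "real \<Rightarrow> quat \<Rightarrow> quat" where
  "qscale r q = Quat (r * qre q) (r * qi q) (r * qj q) (r * qk q)"

text \<open>Hamilton product (i^2 = j^2 = k^2 = ijk = -1).\<close>
definition qmult :: "quat \<Rightarrow> quat \<Rightarrow> quat" where
  "qmult p q = Quat
     (qre p * qre q - qi p * qi q - qj p * qj q - qk p * qk q)
     (qre p * qi q + qi p * qre q + qj p * qk q - qk p * qj q)
     (qre p * qj q - qi p * qk q + qj p * qre q + qk p * qi q)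
     (qre p * qk q + qi p * qj q - qj p * qi q + qk p * qre q)"

definition qconj :: "quat \<Rightarrow> quat" where
  "qconj q = Quat (qre q) (- qi q) (- qj q) (- qk q)"

text \<open>N(q) = q * conj q, which is a real quaternion; we take its real part.\<close>
definition qN :: "quat \<Rightarrow> real" where
  "qN q = qre (qmult q (qconj q))"

definition v1 :: quat where "v1 = Quat 1 0 0 0"
definition v2 :: quat where "v2 = Quat 0 1 0 0"
definition v3 :: quat where "v3 = Quat (1/2) (1/2) (sqrt 2 / 2) 0"
definition v4 :: quat where "v4 = Quat (1/2) (1/2) 0 (sqrt 2 / 2)"

definition H122 :: "quat set" where
  "H122 = {qadd (qadd (qscale (of_int a) v1) (qscale (of_int b) v2))
                (qadd (qscale (of_int c) v3) (qscale (of_int d) v4)) | a b c d :: int. True}"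

definition one_plus_i :: quat where "one_plus_i = Quat 1 1 0 0"

end

theory Submission
  imports Defs
begin

lemma par:
  fixes a b c d :: int
  assumes "even (a^2+b^2+(a+b)*(c+d)+c^2+c*d+d^2)"
  shows "even (c+d) \<and> even (a+b+c)"
  using assms by (auto simp: even_add even_mult_iff)

lemma mem: "qadd (qadd (qscale (of_int a) v1) (qscale (of_int b) v2))
                (qadd (qscale (of_int c) v3) (qscale (of_int d) v4)) \<in> H122"
  unfolding H122_def by blast

theorem theorem3:
  assumes "g \<in> H122"
    and "\<exists>k::int. qN g = of_int (2 * k)"
  shows "\<exists>h \<in> H122. \<exists>h' \<in> H122. g = qmult one_plus_i h \<and> g = qmult h' one_plus_i"
proof -
  obtain a b c d :: int where g: "g = qadd (qadd (qscale (of_int a) v1) (qscale (of_int b) v2))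
                (qadd (qscale (of_int c) v3) (qscale (of_int d) v4))"
    using assms(1) unfolding H122_def by blast
  obtain k :: int where k: "qN g = of_int (2*k)" using assms(2) by blast
  have s2: "sqrt 2 * sqrt 2 = (2::real)" by simp
  have "qN g = of_int (a^2+b^2+(a+b)*(c+d)+c^2+c*d+d^2)"
    unfolding g qN_def qmult_def qconj_def qadd_def qscale_def v1_def v2_def v3_def v4_def
    by (simp add: algebra_simps power2_eq_square s2)
  with k have "a^2+b^2+(a+b)*(c+d)+c^2+c*d+d^2 = 2*k" by linarith
  then have "even (a^2+b^2+(a+b)*(c+d)+c^2+c*d+d^2)" by simp
  from par[OF this] have "even (c+d)" "even (a+b+c)" by auto
  then obtain p q where p: "c+d = 2*p" and q: "a+b+c = 2*q"
    by (meson evenE)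
  have d: "d = 2*p - c" and b: "b = 2*q - a - c" using p q by auto
  let ?h = "qadd (qadd (qscale (of_int q) v1) (qscale (of_int (q-a-p)) v2))
                (qadd (qscale (of_int p) v3) (qscale (of_int (p-c)) v4))"
  let ?h' = "qadd (qadd (qscale (of_int (q-c+p)) v1) (qscale (of_int (q-a-c)) v2))
                (qadd (qscale (of_int (c-p)) v3) (qscale (of_int p) v4))"
  have 1: "g = qmult one_plus_i ?h"
    unfolding g d b one_plus_i_def qmult_def qadd_def qscale_def v1_def v2_def v3_def v4_def
    by (simp add: algebra_simps, simp add: field_simps)
  have 2: "g = qmult ?h' one_plus_i"
    unfolding g d b one_plus_i_def qmult_def qadd_def qscale_def v1_def v2_def v3_def v4_def
    by (simp add: algebra_simps, simp add: field_simps)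
  show ?thesis using 1 2 mem by blast
qed

end
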